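(* Let $N\ge2$ and $\gamma^1,\dots,\gamma^N>0$ with $\gamma^N=\max\{\gamma^1,\dots,\gamma^N\}$, and let $$\Gamma:=\mathrm{diag}\{\gamma^1,\dots,\gamma^{N-1}\}-\tfrac1N\mathbb 1_{N-1}\mathbb 1_{N-1}^\top\mathrm{diag}\{\gamma^1-\gamma^N,\dots,\gamma^{N-1}-\gamma^N\}\in\mathbb R^{(N-1)\times(N-1)}.$$ Then $\Gamma$ is positive definite, i.e. $b^\top\Gamma b>0$ for all $b\in\mathbb R^{N-1}\setminus\{0\}$, and $\Gamma$ has only positive eigenvalues.
   Context: $\mathbb 1_{N-1}$ is the all-ones vector in $\mathbb R^{N-1}$. Positive definiteness here does not require symmetry ($\Gamma$ is in general not symmetric). *)

theory Defs
  imports "HOL-Analysis.Analysis"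
begin

text \<open>The (N-1)x(N-1) matrix Gamma, indexed by a finite type 'n with CARD('n) = N - 1.
  g gives gamma^1..gamma^(N-1), gN is gamma^N, and N = CARD('n) + 1.\<close>
definition Gamma_mat :: "real^'n::finite \<Rightarrow> real \<Rightarrow> real^'n^'n" where
  "Gamma_mat g gN =
     (\<chi> i j. (if i = j then g $ i else 0)
             - (1 / real (CARD('n) + 1)) * (g $ j - gN))"

definition cmat :: "real^'n^'m \<Rightarrow> complex^'n^'m" where
  "cmat A = (\<chi> i j. complex_of_real (A $ i $ j))"

end

theory Submission
  imports Defs
begin

lemma sum_delta_plus:
  fixes a f :: "'n::finite \<Rightarrow> 'a::comm_ring_1"
  shows "(\<Sum>j\<in>UNIV. (if i = j then a j else 0) + k * f j) = a i + k * sum f UNIV"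
  by (simp add: sum.distrib sum_distrib_left)

lemma Gamma_row:
  fixes g b :: "real^'n::finite"
  shows "(Gamma_mat g gN *v b) $ i = g$i * b$i + (1/real(CARD('n)+1)) * (\<Sum>j\<in>UNIV. (gN - g$j) * b$j)"
proof -
  have "(Gamma_mat g gN *v b) $ i = (\<Sum>j\<in>UNIV. (if i = j then g$i * b$j else 0) + (1/real(CARD('n)+1)) * ((gN - g$j) * b$j))"
    unfolding matrix_vector_mult_def Gamma_mat_def by (auto intro!: sum.cong simp: field_simps)
  also have "\<dots> = g$i * b$i + (1/real(CARD('n)+1)) * (\<Sum>j\<in>UNIV. (gN - g$j) * b$j)"
    by (rule sum_delta_plus)
  finally show ?thesis .
qed

lemma cGamma_row:
  fixes g :: "real^'n::finite" and v :: "complex^'n"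
  shows "(cmat (Gamma_mat g gN) *v v) $ i = of_real (g$i) * v$i + of_real (1/real(CARD('n)+1)) * (\<Sum>j\<in>UNIV. of_real (gN - g$j) * v$j)"
proof -
  define c where "c = 1/real(CARD('n)+1)"
  have "(cmat (Gamma_mat g gN) *v v) $ i = (\<Sum>j\<in>UNIV. (if i = j then of_real (g$i) * v$j else 0) + of_real c * (of_real (gN - g$j) * v$j))"
    unfolding matrix_vector_mult_def Gamma_mat_def cmat_def c_def[symmetric]
    by (auto intro!: sum.cong simp: algebra_simps)
  also have "\<dots> = of_real (g$i) * v$i + of_real c * (\<Sum>j\<in>UNIV. of_real (gN - g$j) * v$j)"
    by (rule sum_delta_plus)
  finally show ?thesis unfolding c_def .
qed

lemma term_bound:
  fixes h H c s b :: real
  assumes "0 \<le> h" "h \<le> H"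
  shows "h * (b^2 - c * s * b) \<ge> - H * c^2 * s^2 / 4"
proof (cases "b^2 - c * s * b \<ge> 0")
  case True
  then have "h * (b^2 - c * s * b) \<ge> 0" using assms by simp
  moreover have "H * c^2 * s^2 / 4 \<ge> 0" using assms by simp
  ultimately show ?thesis by linarith
next
  case False
  have "h * (b^2 - c * s * b) \<ge> H * (b^2 - c * s * b)" using False assms
    by (simp add: mult_right_mono_neg)
  moreover have "(b^2 - c * s * b) \<ge> (- (c^2 * s^2 / 4))"
  proof -
    have "(b - c * s / 2)^2 \<ge> 0" by simp
    then show ?thesis by (simp add: power2_eq_square algebra_simps)
  qed
  then have "H * (b^2 - c * s * b) \<ge> H * (- (c^2 * s^2 / 4))" using assms by (intro mult_left_mono) auto
  ultimately show ?thesis by simp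
qed

lemma posdef:
  fixes g :: "real^'n::finite" and gN :: real
  assumes pos: "\<And>i. g $ i > 0"
    and maxN: "\<And>i. g $ i \<le> gN"
    and b0: "b \<noteq> 0"
  shows "b \<bullet> (Gamma_mat g gN *v b) > 0"
proof -
  define n where "n = real CARD('n)"
  define c where "c = 1 / real (CARD('n) + 1)"
  define s where "s = (\<Sum>i\<in>UNIV. b$i)"
  define d where "d = Min (range (\<lambda>i. g$i))"
  have dpos: "d > 0" unfolding d_def using pos by (simp)
  have dle: "d \<le> g$i" for i unfolding d_def by simp
  have npos: "n \<ge> 0" unfolding n_def by simp
  have cpos: "c > 0" unfolding c_def by simp
  have nc: "n * c \<le> 1" unfolding c_def n_def by (simp add: field_simps)
  define T where "T = (\<Sum>j\<in>UNIV. (gN - g$j) * b$j)"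
  have Q: "b \<bullet> (Gamma_mat g gN *v b) = c * gN * s^2 + (\<Sum>i\<in>UNIV. g$i * ((b$i)^2 - c * s * b$i))"
  proof -
    have "b \<bullet> (Gamma_mat g gN *v b) = (\<Sum>i\<in>UNIV. b$i * (g$i * b$i + c * T))"
      unfolding inner_vec_def Gamma_row c_def[symmetric] T_def[symmetric] by (simp add: inner_real_def)
    also have "\<dots> = (\<Sum>i\<in>UNIV. g$i * (b$i)^2 + (c * T) * b$i)"
      by (intro sum.cong) (auto simp: algebra_simps power2_eq_square)
    also have "\<dots> = (\<Sum>i\<in>UNIV. g$i * (b$i)^2) + (c * T) * s"
      by (simp only: sum.distrib sum_distrib_left s_def)
    finally have e1: "b \<bullet> (Gamma_mat g gN *v b) = (\<Sum>i\<in>UNIV. g$i * (b$i)^2) + (c * T) * s" .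
    have e2: "T = gN * s - (\<Sum>j\<in>UNIV. g$j * b$j)"
      unfolding T_def s_def by (simp add: left_diff_distrib sum_subtractf sum_distrib_left)
    have e3: "(\<Sum>i\<in>UNIV. g$i * ((b$i)^2 - c * s * b$i)) = (\<Sum>i\<in>UNIV. g$i * (b$i)^2) - (c * s) * (\<Sum>j\<in>UNIV. g$j * b$j)"
      by (simp add: right_diff_distrib sum_subtractf sum_distrib_left mult_ac)
    have alg: "\<And>A B::real. A + c * (gN * s - B) * s = c * gN * s^2 + (A - c * s * B)"
      by (simp add: algebra_simps power2_eq_square)
    show ?thesis by (subst e1, subst e3, subst e2, rule alg)
  qed
  define H where "H = gN - d"
  have H0: "H \<ge> 0" unfolding H_def using dle[of undefined] maxN[of undefined] by linarith
  have split: "(\<Sum>i\<in>UNIV. g$i * ((b$i)^2 - c * s * b$i)) = d * ((\<Sum>i\<in>UNIV. (b$i)^2) - c * s^2) + (\<Sum>i\<in>UNIV. (g$i - d) * ((b$i)^2 - c * s * b$i))"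
  proof -
    have "(\<Sum>i\<in>UNIV. g$i * ((b$i)^2 - c * s * b$i)) = (\<Sum>i\<in>UNIV. d * ((b$i)^2 - c * s * b$i) + (g$i - d) * ((b$i)^2 - c * s * b$i))"
      by (intro sum.cong) (auto simp: algebra_simps)
    also have "\<dots> = d * (\<Sum>i\<in>UNIV. ((b$i)^2 - c * s * b$i)) + (\<Sum>i\<in>UNIV. (g$i - d) * ((b$i)^2 - c * s * b$i))"
      by (simp only: sum.distrib sum_distrib_left)
    also have "(\<Sum>i\<in>UNIV. ((b$i)^2 - c * s * b$i)) = (\<Sum>i\<in>UNIV. (b$i)^2) - (c * s) * s"
      unfolding s_def by (simp add: sum_subtractf sum_distrib_left mult.assoc)
    finally show ?thesis by (simp add: power2_eq_square)
  qed
  have bnd: "(\<Sum>i\<in>UNIV. (g$i - d) * ((b$i)^2 - c * s * b$i)) \<ge> (\<Sum>i\<in>(UNIV::'n set). - H * c^2 * s^2 / 4)"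
    by (rule sum_mono, rule term_bound) (use dle maxN in \<open>auto simp: H_def\<close>)
  have bnd2: "(\<Sum>i\<in>(UNIV::'n set). - H * c^2 * s^2 / 4) = - n * H * c^2 * s^2 / 4"
    by (simp add: n_def)
  have bb: "(\<Sum>i\<in>UNIV. (b$i)^2) > 0"
  proof -
    have "b \<bullet> b > 0" using b0 by simp
    then show ?thesis by (simp add: inner_vec_def power2_eq_square)
  qed
  have key: "c * H * s^2 * (1 - n * c / 4) \<ge> 0"
    using cpos H0 nc by (intro mult_nonneg_nonneg) auto
  have "b \<bullet> (Gamma_mat g gN *v b) \<ge> d * (\<Sum>i\<in>UNIV. (b$i)^2) + c * H * s^2 * (1 - n * c / 4)"
  proof -
    have a1: "d * ((\<Sum>i\<in>UNIV. (b$i)^2) - c * s^2) = d * (\<Sum>i\<in>UNIV. (b$i)^2) - d * (c * s^2)"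
      by (simp add: right_diff_distrib)
    have a2: "c * gN * s^2 - d * (c * s^2) + (- n * H * c^2 * s^2 / 4) = c * H * s^2 * (1 - n * c / 4)"
      unfolding H_def by (simp add: field_simps power2_eq_square)
    show ?thesis using Q split bnd bnd2 a1 a2 by linarith
  qed
  moreover have "d * (\<Sum>i\<in>UNIV. (b$i)^2) > 0" using dpos bb by simp
  ultimately show ?thesis using key by linarith
qed


lemma eig_real:
  fixes g :: "real^'n::finite" and gN :: real
  assumes maxN: "\<And>i. g $ i \<le> gN"
    and v0: "v \<noteq> 0" and ev: "cmat (Gamma_mat g gN) *v v = mu *s v"
  shows "mu \<in> \<real>"
proof -
  define c where "c = 1/real(CARD('n)+1)"
  define e where "e j = gN - g$j" for j
  define tau where "tau = (\<Sum>j\<in>UNIV. of_real (e j) * v$j)"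
  have comp: "of_real (g$i) * v$i + of_real c * tau = mu * v$i" for i
  proof -
    have "(cmat (Gamma_mat g gN) *v v) $ i = (mu *s v) $ i" using ev by simp
    then show ?thesis unfolding cGamma_row c_def[symmetric] tau_def e_def by simp
  qed
  define K where "K = (\<Sum>i\<in>UNIV. e i * (cmod (v$i))^2)"
  define R where "R = (\<Sum>i\<in>UNIV. e i * g$i * (cmod (v$i))^2) + c * (cmod tau)^2"
  have cz: "cnj z * z = of_real ((cmod z)^2)" for z
    using complex_norm_square[of z] by (simp add: mult.commute)
  have ctau: "cnj tau = (\<Sum>j\<in>UNIV. of_real (e j) * cnj (v$j))"
    unfolding tau_def by (simp add: cnj_sum)
  have lhs: "(\<Sum>i\<in>UNIV. cnj (v$i) * of_real (e i) * (mu * v$i)) = mu * of_real K"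
  proof -
    have "(\<Sum>i\<in>UNIV. cnj (v$i) * of_real (e i) * (mu * v$i)) = (\<Sum>i\<in>UNIV. mu * (of_real (e i) * (cnj (v$i) * v$i)))"
      by (intro sum.cong) (auto simp: mult_ac)
    also have "\<dots> = mu * of_real K"
      unfolding K_def cz by (simp add: sum_distrib_left)
    finally show ?thesis .
  qed
  have rhs: "(\<Sum>i\<in>UNIV. cnj (v$i) * of_real (e i) * (of_real (g$i) * v$i + of_real c * tau)) = of_real R"
  proof -
    have "(\<Sum>i\<in>UNIV. cnj (v$i) * of_real (e i) * (of_real (g$i) * v$i + of_real c * tau))
        = (\<Sum>i\<in>UNIV. of_real (e i * g$i) * (cnj (v$i) * v$i) + (of_real c * tau) * (of_real (e i) * cnj (v$i)))"
      by (intro sum.cong) (auto simp: algebra_simps)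
    also have "\<dots> = (\<Sum>i\<in>UNIV. of_real (e i * g$i) * (cnj (v$i) * v$i)) + (of_real c * tau) * cnj tau"
      unfolding ctau by (simp add: sum.distrib sum_distrib_left)
    also have "\<dots> = of_real R"
    proof -
      have tt: "tau * cnj tau = (of_real (cmod tau))^2" using complex_norm_square[of tau] by simp
      show ?thesis unfolding R_def cz by (simp add: mult_ac tt)
    qed
    finally show ?thesis .
  qed
  have eqKR: "mu * of_real K = of_real R"
    using lhs rhs comp by simp
  have e0: "e i \<ge> 0" for i unfolding e_def using maxN[of i] by simp
  have K0: "K \<ge> 0" unfolding K_def using e0 by (intro sum_nonneg) simp
  show ?thesis
  proof (cases "K = 0")
    case False
    then have "mu = of_real (R / K)" using eqKR by (simp add: field_simps)
    then show ?thesis by simp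
  next
    case True
    have "\<forall>i\<in>UNIV. e i * (cmod (v$i))^2 = 0"
      using True unfolding K_def by (subst sum_nonneg_eq_0_iff[symmetric]) (use e0 in auto)
    then have ev0: "of_real (e i) * v$i = 0" for i by auto
    have "tau = 0" unfolding tau_def using ev0 by (intro sum.neutral) blast
    obtain i where vi: "v$i \<noteq> 0" using v0 by (auto simp: vec_eq_iff)
    have "of_real (g$i) * v$i = mu * v$i" using comp[of i] \<open>tau = 0\<close> by simp
    then have "mu = of_real (g$i)" using vi by simp
    then show ?thesis by simp
  qed
qed

lemma eig_pos:
  fixes g :: "real^'n::finite" and gN :: real
  assumes pos: "\<And>i. g $ i > 0"
    and maxN: "\<And>i. g $ i \<le> gN"
    and v0: "v \<noteq> 0" and ev: "cmat (Gamma_mat g gN) *v v = mu *s v"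
  shows "Re mu > 0"
proof -
  have "mu \<in> \<real>" by (rule eig_real[OF maxN v0 ev])
  then obtain r where mur: "mu = of_real r" by (auto elim: Reals_cases)
  define c where "c = 1/real(CARD('n)+1)"
  have comp: "of_real (g$i) * v$i + of_real c * (\<Sum>j\<in>UNIV. of_real (gN - g$j) * v$j) = of_real r * v$i" for i
  proof -
    have "(cmat (Gamma_mat g gN) *v v) $ i = (mu *s v) $ i" using ev by simp
    then show ?thesis unfolding cGamma_row c_def[symmetric] mur by simp
  qed
  define x where "x = (\<chi> i. Re (v$i))"
  define y where "y = (\<chi> i. Im (v$i))"
  have ex: "Gamma_mat g gN *v x = r *s x"
  proof (rule iffD2[OF vec_eq_iff], rule allI)
    fix i
    have "Re (of_real (g$i) * v$i + of_real c * (\<Sum>j\<in>UNIV. of_real (gN - g$j) * v$j)) = Re (of_real r * v$i)"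
      using comp[of i] by simp
    then show "(Gamma_mat g gN *v x) $ i = (r *s x) $ i"
      unfolding Gamma_row c_def[symmetric] x_def by (simp add: Re_sum)
  qed
  have ey: "Gamma_mat g gN *v y = r *s y"
  proof (rule iffD2[OF vec_eq_iff], rule allI)
    fix i
    have "Im (of_real (g$i) * v$i + of_real c * (\<Sum>j\<in>UNIV. of_real (gN - g$j) * v$j)) = Im (of_real r * v$i)"
      using comp[of i] by simp
    then show "(Gamma_mat g gN *v y) $ i = (r *s y) $ i"
      unfolding Gamma_row c_def[symmetric] y_def by (simp add: Im_sum)
  qed
  have gen: "r > 0" if z0: "z \<noteq> 0" and ez: "Gamma_mat g gN *v z = r *s z" for z
  proof -
    have "z \<bullet> (Gamma_mat g gN *v z) > 0" by (rule posdef[OF pos maxN z0])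
    then have "r * (z \<bullet> z) > 0" using ez by (simp add: scalar_mult_eq_scaleR)
    moreover have "z \<bullet> z > 0" using z0 by simp
    ultimately show ?thesis by (simp add: zero_less_mult_iff)
  qed
  have "x \<noteq> 0 \<or> y \<noteq> 0"
  proof (rule ccontr)
    assume "\<not> (x \<noteq> 0 \<or> y \<noteq> 0)"
    then have "v$i = 0" for i
      by (auto simp: x_def y_def vec_eq_iff complex_eq_iff)
    then show False using v0 by (auto simp: vec_eq_iff)
  qed
  then have "r > 0" using gen ex ey by blast
  then show ?thesis using mur by simp
qed

theorem lemma7p1:
  fixes g :: "real^'n::finite" and gN :: real
  assumes pos: "\<And>i. g $ i > 0"
    and posN: "gN > 0"
    and maxN: "\<And>i. g $ i \<le> gN"
  shows "(\<forall>b :: real^'n. b \<noteq> 0 \<longrightarrow> b \<bullet> (Gamma_mat g gN *v b) > 0)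
       \<and> (\<forall>(mu::complex) (v::complex^'n). v \<noteq> 0 \<and> cmat (Gamma_mat g gN) *v v = mu *s v
            \<longrightarrow> mu \<in> \<real> \<and> Re mu > 0)"
  using posdef[OF pos maxN] eig_real[OF maxN] eig_pos[OF pos maxN] by blast

end
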